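(* Let $P=\{x_1,\dots,x_n\}\subset\mathbb{R}^d$, let $x$ be a query with nonnegative weights $w_1,\dots,w_n$, and let $Z_h$ be the $(\mathcal{H},\nu)$-hashing-based estimator. Let $\tilde P=\{i\in[n]:p_i>0\}$ and suppose the indices are ordered so that $p_1\ge p_2\ge\dots\ge p_n$. Then $$\mathbb{E}[Z_h]=\frac1n\sum_{i\in\tilde P}w_i\qquad\text{and}\qquad\mathbb{E}[Z_h^2]\le\frac{1}{n^2}\sum_{i\in\tilde P}\frac{w_i^2}{p_i}\left(i+\sum_{j>i}\frac{p_j}{p_i}\right).$$
   Context: Given a family $\mathcal{H}$ of hash functions on $\mathbb{R}^d$ with a probability distribution $\nu$, sample $h\sim\nu$; let $H(x)=\{i\in[n]:h(x_i)=h(x)\}$, let $I(x)$ be a uniformly random element of $H(x)$, or $\perp$ if $H(x)$ is empty, and let $p_i=\Pr_{h\sim\nu}[i\in H(x)]$, with conventions $p_\perp=1$, $w_\perp=0$. The $(\mathcal{H},\nu)$-hashing-based estimator is $Z_h=Z_h(x)=\frac{w_{I(x)}}{p_{I(x)}}\cdot\frac{|H(x)|}{n}$. *)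

theory Defs
  imports "HOL-Probability.Probability"
begin

text \<open>Points are indexed by {1..n}. A random hash function is h :: 'w => real^'d => 'b,
  where 'w is the sample space of the probability space M (the distribution nu).\<close>

definition hbucket :: "(real^'d \<Rightarrow> 'b) \<Rightarrow> (nat \<Rightarrow> real^'d) \<Rightarrow> nat \<Rightarrow> real^'d \<Rightarrow> nat set" where
  "hbucket g P n x = {i \<in> {1..n}. g (P i) = g x}"

definition collprob :: "'w measure \<Rightarrow> ('w \<Rightarrow> real^'d \<Rightarrow> 'b) \<Rightarrow> (nat \<Rightarrow> real^'d) \<Rightarrow> real^'d \<Rightarrow> nat \<Rightarrow> real" where
  "collprob M h P x i = measure M {\<omega> \<in> space M. h \<omega> (P i) = h \<omega> x}"

text \<open>Value of the estimator for a sampled hash (bucket S) and sampled index I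
  (None stands for \<bottom>, with w_\<bottom> = 0 and p_\<bottom> = 1).\<close>
definition Zval :: "(nat \<Rightarrow> real) \<Rightarrow> (nat \<Rightarrow> real) \<Rightarrow> nat \<Rightarrow> nat set \<Rightarrow> nat option \<Rightarrow> real" where
  "Zval w p n S I = (case I of None \<Rightarrow> 0 / 1 | Some i \<Rightarrow> w i / p i) * (real (card S) / real n)"

text \<open>Expectation of a quantity f(h, I(x)) under the two-stage experiment:
  h ~ nu, then I(x) uniform on H(x) (or \<bottom> = None if H(x) is empty).\<close>
definition hexp :: "'w measure \<Rightarrow> ('w \<Rightarrow> real^'d \<Rightarrow> 'b) \<Rightarrow> (nat \<Rightarrow> real^'d) \<Rightarrow> nat \<Rightarrow> real^'d
    \<Rightarrow> ('w \<Rightarrow> nat option \<Rightarrow> real) \<Rightarrow> real" where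
  "hexp M h P n x f = (\<integral>\<omega>. (let S = hbucket (h \<omega>) P n x in
      if S = {} then f \<omega> None else (\<Sum>i\<in>S. f \<omega> (Some i)) / real (card S)) \<partial>M)"

end

theory Submission
  imports Defs
begin

theorem lemma3:
  fixes M :: "'w measure" and h :: "'w \<Rightarrow> real^'d \<Rightarrow> 'b"
    and P :: "nat \<Rightarrow> real^'d" and x :: "real^'d" and n :: nat and w :: "nat \<Rightarrow> real"
  assumes "prob_space M"
    and meas: "\<And>i. i \<in> {1..n} \<Longrightarrow> {\<omega> \<in> space M. h \<omega> (P i) = h \<omega> x} \<in> sets M"
    and wnn: "\<And>i. i \<in> {1..n} \<Longrightarrow> w i \<ge> 0"
    and ord: "\<And>i j. 1 \<le> i \<Longrightarrow> i \<le> j \<Longrightarrow> j \<le> n \<Longrightarrow> collprob M h P x j \<le> collprob M h P x i"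
  shows "(hexp M h P n x (\<lambda>\<omega> I. Zval w (collprob M h P x) n (hbucket (h \<omega>) P n x) I)
           = (1 / real n) * (\<Sum>i\<in>{i \<in> {1..n}. collprob M h P x i > 0}. w i)) \<and>
         (hexp M h P n x (\<lambda>\<omega> I. (Zval w (collprob M h P x) n (hbucket (h \<omega>) P n x) I)\<^sup>2)
           \<le> (1 / (real n)\<^sup>2) * (\<Sum>i\<in>{i \<in> {1..n}. collprob M h P x i > 0}.
                (w i)\<^sup>2 / collprob M h P x i *
                (real i + (\<Sum>j\<in>{i<..n}. collprob M h P x j / collprob M h P x i))))"
proof -
  interpret prob_space M by fact
  define A where "A i = {\<omega> \<in> space M. h \<omega> (P i) = h \<omega> x}" for i
  define p where "p = collprob M h P x"
  have pA: "p i = measure M (A i)" for i by (simp add: p_def A_def collprob_def)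
  have Asets: "i \<in> {1..n} \<Longrightarrow> A i \<in> sets M" for i using meas by (simp add: A_def)
  have p0: "p i \<ge> 0" for i by (simp add: pA)
  have bk: "\<omega> \<in> space M \<Longrightarrow> hbucket (h \<omega>) P n x = {i \<in> {1..n}. \<omega> \<in> A i}" for \<omega>
    by (auto simp: hbucket_def A_def)
  have fin: "finite (hbucket (h \<omega>) P n x)" for \<omega> by (simp add: hbucket_def)
  have ind: "\<And>i c. i \<in> {1..n} \<Longrightarrow> integral\<^sup>L M (\<lambda>\<omega>. indicator (A i) \<omega> * c) = p i * c"
    using Asets pA by simp
  have intind: "\<And>i c. i \<in> {1..n} \<Longrightarrow> integrable M (\<lambda>\<omega>. indicator (A i) \<omega> * c :: real)"
    using Asets by (intro integrable_mult_left integrable_real_indicator) (auto simp: less_top[symmetric])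
  have pw1: "(let S = hbucket (h \<omega>) P n x in
      if S = {} then Zval w p n (hbucket (h \<omega>) P n x) None
      else (\<Sum>i\<in>S. Zval w p n (hbucket (h \<omega>) P n x) (Some i)) / real (card S))
     = (\<Sum>i\<in>{1..n}. indicator (A i) \<omega> * (w i / p i / real n))" if "\<omega> \<in> space M" for \<omega>
  proof -
    let ?S = "hbucket (h \<omega>) P n x"
    have e: "(\<Sum>i\<in>{1..n}. indicator (A i) \<omega> * (w i / p i / real n)) = (\<Sum>i\<in>?S. w i / p i / real n)"
      unfolding bk[OF that] by (subst sum.inter_filter) (auto simp: indicator_def intro!: sum.cong)
    show ?thesis
    proof (cases "?S = {}")
      case True thus ?thesis using e by (simp add: Zval_def)
    next
      case False
      then have "card ?S > 0" using fin by (simp add: card_gt_0_iff)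
      have "(\<Sum>i\<in>?S. Zval w p n ?S (Some i)) = (\<Sum>i\<in>?S. real (card ?S) * (w i / p i / real n))"
        by (intro sum.cong) (auto simp: Zval_def)
      also have "\<dots> = real (card ?S) * (\<Sum>i\<in>?S. w i / p i / real n)"
        by (simp add: sum_distrib_left)
      finally show ?thesis using False e \<open>card ?S > 0\<close> by (simp add: Let_def)
    qed
  qed
  have E1: "hexp M h P n x (\<lambda>\<omega> I. Zval w p n (hbucket (h \<omega>) P n x) I)
      = (\<Sum>i\<in>{1..n}. p i * (w i / p i / real n))"
    unfolding hexp_def
    apply (subst Bochner_Integration.integral_cong[OF refl])
     apply (erule pw1)
    apply (subst Bochner_Integration.integral_sum)
     apply (rule intind, assumption)
    apply (rule sum.cong[OF refl])
    apply (rule ind, assumption)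
    done
  have "(\<Sum>i\<in>{1..n}. p i * (w i / p i / real n)) = (\<Sum>i\<in>{1..n}. if p i > 0 then w i / real n else 0)"
    using p0 by (intro sum.cong) (auto simp: less_le)
  also have "\<dots> = (1 / real n) * (\<Sum>i\<in>{i \<in> {1..n}. p i > 0}. w i)"
    by (simp only: sum_distrib_left sum.inter_filter[OF finite_atLeastAtMost]) (rule sum.cong; simp)
  finally have part1: "hexp M h P n x (\<lambda>\<omega> I. Zval w p n (hbucket (h \<omega>) P n x) I)
      = (1 / real n) * (\<Sum>i\<in>{i \<in> {1..n}. p i > 0}. w i)" using E1 by simp
  define B where "B i j = A i \<inter> A j" for i j
  have Bsets: "i \<in> {1..n} \<Longrightarrow> j \<in> {1..n} \<Longrightarrow> B i j \<in> sets M" for i j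
    using Asets by (auto simp: B_def)
  have intB: "\<And>i j c. i \<in> {1..n} \<Longrightarrow> j \<in> {1..n} \<Longrightarrow> integrable M (\<lambda>\<omega>. indicator (B i j) \<omega> * c :: real)"
    using Bsets by (intro integrable_mult_left integrable_real_indicator) (auto simp: less_top[symmetric])
  have pw2: "(let S = hbucket (h \<omega>) P n x in
      if S = {} then (Zval w p n (hbucket (h \<omega>) P n x) None)\<^sup>2
      else (\<Sum>i\<in>S. (Zval w p n (hbucket (h \<omega>) P n x) (Some i))\<^sup>2) / real (card S))
     = (\<Sum>i\<in>{1..n}. \<Sum>j\<in>{1..n}. indicator (B i j) \<omega> * ((w i / p i)\<^sup>2 / (real n)\<^sup>2))"
    if "\<omega> \<in> space M" for \<omega>
  proof -
    let ?S = "hbucket (h \<omega>) P n x"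
    have e: "(\<Sum>i\<in>{1..n}. \<Sum>j\<in>{1..n}. indicator (B i j) \<omega> * ((w i / p i)\<^sup>2 / (real n)\<^sup>2))
       = (\<Sum>i\<in>?S. \<Sum>j\<in>?S. (w i / p i)\<^sup>2 / (real n)\<^sup>2)"
      unfolding bk[OF that] B_def
      by (subst sum.inter_filter, simp, subst sum.inter_filter, simp)
         (auto simp: indicator_def intro!: sum.cong)
    also have "\<dots> = real (card ?S) * (\<Sum>i\<in>?S. (w i / p i)\<^sup>2 / (real n)\<^sup>2)"
      by (simp add: sum_distrib_left)
    finally have e': "(\<Sum>i\<in>{1..n}. \<Sum>j\<in>{1..n}. indicator (B i j) \<omega> * ((w i / p i)\<^sup>2 / (real n)\<^sup>2))
       = real (card ?S) * (\<Sum>i\<in>?S. (w i / p i)\<^sup>2 / (real n)\<^sup>2)" .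
    show ?thesis
    proof (cases "?S = {}")
      case True thus ?thesis using e' by (simp add: Zval_def)
    next
      case False
      then have c: "card ?S > 0" using fin by (simp add: card_gt_0_iff)
      have "(\<Sum>i\<in>?S. (Zval w p n ?S (Some i))\<^sup>2) = (\<Sum>i\<in>?S. (real (card ?S))\<^sup>2 * ((w i / p i)\<^sup>2 / (real n)\<^sup>2))"
        by (intro sum.cong) (auto simp: Zval_def power_mult_distrib power_divide)
      also have "\<dots> = (real (card ?S))\<^sup>2 * (\<Sum>i\<in>?S. (w i / p i)\<^sup>2 / (real n)\<^sup>2)"
        by (simp add: sum_distrib_left)
      finally show ?thesis using False c e'
        by (simp add: Let_def power2_eq_square)
    qed
  qed
  have E2: "hexp M h P n x (\<lambda>\<omega> I. (Zval w p n (hbucket (h \<omega>) P n x) I)\<^sup>2)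
      = (\<Sum>i\<in>{1..n}. \<Sum>j\<in>{1..n}. measure M (B i j) * ((w i / p i)\<^sup>2 / (real n)\<^sup>2))"
    unfolding hexp_def
    apply (subst Bochner_Integration.integral_cong[OF refl])
     apply (erule pw2)
    apply (subst Bochner_Integration.integral_sum)
     apply (rule Bochner_Integration.integrable_sum, rule intB; simp)
    apply (rule sum.cong[OF refl])
    apply (subst Bochner_Integration.integral_sum)
     apply (rule intB; simp)
    apply (rule sum.cong[OF refl])
    using Bsets by simp
  have bnd: "(\<Sum>j\<in>{1..n}. measure M (B i j) * ((w i / p i)\<^sup>2 / (real n)\<^sup>2))
     \<le> (if p i > 0 then (1 / (real n)\<^sup>2) * ((w i)\<^sup>2 / p i * (real i + (\<Sum>j\<in>{i<..n}. p j / p i))) else 0)"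
    if i: "i \<in> {1..n}" for i
  proof (cases "p i > 0")
    case False
    then have "p i = 0" using p0[of i] by simp
    then show ?thesis by simp
  next
    case True
    let ?c = "(w i / p i)\<^sup>2 / (real n)\<^sup>2"
    have c0: "?c \<ge> 0" by simp
    have le1: "measure M (B i j) \<le> p i" for j unfolding B_def pA
      using i Asets by (intro finite_measure_mono) auto
    have le2: "measure M (B i j) \<le> p j" if "j \<in> {1..n}" for j unfolding B_def pA
      using that Asets by (intro finite_measure_mono) auto
    have split: "{1..n} = {1..i} \<union> {i<..n}" using i by auto
    have "(\<Sum>j\<in>{1..n}. measure M (B i j) * ?c) = (\<Sum>j\<in>{1..i}. measure M (B i j) * ?c) + (\<Sum>j\<in>{i<..n}. measure M (B i j) * ?c)"
      unfolding split by (rule sum.union_disjoint) auto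
    also have "\<dots> \<le> (\<Sum>j\<in>{1..i}. p i * ?c) + (\<Sum>j\<in>{i<..n}. p j * ?c)"
      apply (intro add_mono sum_mono mult_right_mono c0 le1 le2)
      using i by auto
    also have "\<dots> = (real i * p i + (\<Sum>j\<in>{i<..n}. p j)) * ?c"
    proof -
      have s1: "(\<Sum>j\<in>{1..i}. p i * ?c) = real i * p i * ?c" by simp
      have s2: "(\<Sum>j\<in>{i<..n}. p j * ?c) = (\<Sum>j\<in>{i<..n}. p j) * ?c"
        by (rule sum_distrib_right[symmetric])
      show ?thesis unfolding s1 s2 by (rule distrib_right[symmetric])
    qed
    also have "\<dots> = (1 / (real n)\<^sup>2) * ((w i)\<^sup>2 / p i * (real i + (\<Sum>j\<in>{i<..n}. p j / p i)))"
      using True by (simp add: sum_divide_distrib[symmetric] field_simps power2_eq_square)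
    finally show ?thesis using True by simp
  qed
  have "hexp M h P n x (\<lambda>\<omega> I. (Zval w p n (hbucket (h \<omega>) P n x) I)\<^sup>2)
     \<le> (\<Sum>i\<in>{1..n}. (if p i > 0 then (1 / (real n)\<^sup>2) * ((w i)\<^sup>2 / p i * (real i + (\<Sum>j\<in>{i<..n}. p j / p i))) else 0))"
    unfolding E2 by (rule sum_mono) (rule bnd)
  also have "\<dots> = (1 / (real n)\<^sup>2) * (\<Sum>i\<in>{i \<in> {1..n}. p i > 0}. (w i)\<^sup>2 / p i * (real i + (\<Sum>j\<in>{i<..n}. p j / p i)))"
    by (simp only: sum_distrib_left sum.inter_filter[OF finite_atLeastAtMost]) (rule sum.cong; simp)
  finally show ?thesis using part1 unfolding p_def by simp
qed

end
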